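(* In the $T$-period model described in the context, with short sales prohibitions (admissible strategies are predictable self-financing with $h_m(t)\ge 0$ for $m\ge 1$), suppose there exists a strong risk neutral nonlinear expectation: a nonempty family $\mathcal{Q}$ of probability measures on $\Omega$ with $\sup_{Q\in\mathcal{Q}}Q(\omega)>0$ for all $\omega\in\Omega$ such that for every $Q\in\mathcal{Q}$, all $0\le t\le u\le T$ and all $m=1,\dots,M$, $E_Q[S_m^*(u)\mid\mathcal{F}_t]\le S_m^*(t)$ holds $Q$-almost surely (i.e. $\sup_{Q\in\mathcal{Q}}E_Q[S_m^*(u)\mid\mathcal{F}_t]\le S_m^*(t)$). Then there is no multi-period arbitrage under model uncertainty.
   Context: Multi-period model: $\Omega=\{\omega_1,\dots,\omega_K\}$ is finite with a filtration $\mathcal{F}_0\subseteq\cdots\subseteq\mathcal{F}_T$, $\mathcal{F}_0$ trivial and $\mathcal{F}_T=2^\Omega$. $\mathcal{P}$ is a nonempty family of probability measures on $\Omega$ with $\sup_{P\in\mathcal{P}}P(\omega)>0$ for all $\omega$. Bond: $S_0(0)=1$, $S_0(t)=(1+r_1)\cdots(1+r_t)$, each $r_t\ge 0$ $\mathcal{F}_{t-1}$-measurable. Risky securities $S_m(t)$ are $\mathcal{F}_t$-measurable with $S_m(0)>0$. Discounted prices $S_m^*(t)=S_m(t)/S_0(t)$, $\Delta S_m^*(t)=S_m^*(t)-S_m^*(t-1)$. A trading strategy $H=(h(t))_{t=1}^T$, $h(t)=(h_0(t),\dots,h_M(t))$ $\mathcal{F}_{t-1}$-measurable; $V^*(0)=h_0(1)+\sum_m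 h_m(1)S_m^*(0)$, $V^*(t)=h_0(t)+\sum_m h_m(t)S_m^*(t)$. $H$ is self-financing if $[h_0(t+1)-h_0(t)]+\sum_m[h_m(t+1)-h_m(t)]S_m^*(t)=0$ for $t=1,\dots,T-1$. An admissible self-financing $H$ is a multi-period arbitrage under model uncertainty if $V^*(0)=0$, $V^*(T)\ge 0$ on $\Omega$, and $\sup_{P\in\mathcal{P}}E_P[V^*(T)]>0$. *)

theory Defs
  imports Complex_Main
begin

text \<open>Finite sample space: the finite type 'w, Omega = UNIV.
  A probability measure is given by its point masses.\<close>

definition is_prob :: "('w::finite \<Rightarrow> real) \<Rightarrow> bool" where
  "is_prob P \<longleftrightarrow> (\<forall>w. 0 \<le> P w) \<and> (\<Sum>w\<in>UNIV. P w) = 1"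

definition expect :: "('w::finite \<Rightarrow> real) \<Rightarrow> ('w \<Rightarrow> real) \<Rightarrow> real" where
  "expect P X = (\<Sum>w\<in>UNIV. P w * X w)"

definition is_algebra :: "'w set set \<Rightarrow> bool" where
  "is_algebra F \<longleftrightarrow> UNIV \<in> F \<and> (\<forall>A\<in>F. - A \<in> F) \<and> (\<forall>A\<in>F. \<forall>B\<in>F. A \<union> B \<in> F)"

definition fmeas :: "'w set set \<Rightarrow> ('w \<Rightarrow> real) \<Rightarrow> bool" where
  "fmeas F f \<longleftrightarrow> (\<forall>c. {w. f w = c} \<in> F)"

definition filtration :: "nat \<Rightarrow> (nat \<Rightarrow> 'w set set) \<Rightarrow> bool" where
  "filtration T F \<longleftrightarrow> (\<forall>t\<le>T. is_algebra (F t)) \<and> F 0 = {{}, UNIV}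
     \<and> (\<forall>t<T. F t \<subseteq> F (Suc t)) \<and> F T = Pow UNIV"

text \<open>Atom of F containing w, and the elementary conditional expectation
  E_Q[X | F](w) (well-defined whenever Q(atom) > 0, in particular Q-a.s.).\<close>
definition atom :: "'w set set \<Rightarrow> 'w \<Rightarrow> 'w set" where
  "atom F w = \<Inter>{A\<in>F. w \<in> A}"

definition cond_exp :: "('w::finite \<Rightarrow> real) \<Rightarrow> 'w set set \<Rightarrow> ('w \<Rightarrow> real) \<Rightarrow> 'w \<Rightarrow> real" where
  "cond_exp Q F X w = (\<Sum>v\<in>atom F w. Q v * X v) / (\<Sum>v\<in>atom F w. Q v)"

definition bond :: "(nat \<Rightarrow> 'w \<Rightarrow> real) \<Rightarrow> nat \<Rightarrow> 'w \<Rightarrow> real" where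
  "bond r t w = (\<Prod>s\<in>{1..t}. 1 + r s w)"

definition disc :: "(nat \<Rightarrow> nat \<Rightarrow> 'w \<Rightarrow> real) \<Rightarrow> (nat \<Rightarrow> 'w \<Rightarrow> real) \<Rightarrow> nat \<Rightarrow> nat \<Rightarrow> 'w \<Rightarrow> real" where
  "disc S r m t w = S m t w / bond r t w"

text \<open>Strategy h t m w: holding of security m (m=0 bond) over period t (t=1..T).\<close>
definition value0 :: "nat \<Rightarrow> (nat \<Rightarrow> nat \<Rightarrow> 'w \<Rightarrow> real) \<Rightarrow> (nat \<Rightarrow> 'w \<Rightarrow> real)
    \<Rightarrow> (nat \<Rightarrow> nat \<Rightarrow> 'w \<Rightarrow> real) \<Rightarrow> 'w \<Rightarrow> real" where
  "value0 M S r h w = h 1 0 w + (\<Sum>m=1..M. h 1 m w * disc S r m 0 w)"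

definition valuet :: "nat \<Rightarrow> (nat \<Rightarrow> nat \<Rightarrow> 'w \<Rightarrow> real) \<Rightarrow> (nat \<Rightarrow> 'w \<Rightarrow> real)
    \<Rightarrow> (nat \<Rightarrow> nat \<Rightarrow> 'w \<Rightarrow> real) \<Rightarrow> nat \<Rightarrow> 'w \<Rightarrow> real" where
  "valuet M S r h t w = h t 0 w + (\<Sum>m=1..M. h t m w * disc S r m t w)"

definition predictable :: "nat \<Rightarrow> nat \<Rightarrow> (nat \<Rightarrow> 'w set set) \<Rightarrow> (nat \<Rightarrow> nat \<Rightarrow> 'w \<Rightarrow> real) \<Rightarrow> bool" where
  "predictable T M F h \<longleftrightarrow> (\<forall>t\<in>{1..T}. \<forall>m\<le>M. fmeas (F (t - 1)) (h t m))"

definition self_financing :: "nat \<Rightarrow> nat \<Rightarrow> (nat \<Rightarrow> nat \<Rightarrow> 'w \<Rightarrow> real) \<Rightarrow> (nat \<Rightarrow> 'w \<Rightarrow> real)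
    \<Rightarrow> (nat \<Rightarrow> nat \<Rightarrow> 'w \<Rightarrow> real) \<Rightarrow> bool" where
  "self_financing T M S r h \<longleftrightarrow> (\<forall>t\<in>{1..<T}. \<forall>w.
     (h (Suc t) 0 w - h t 0 w) + (\<Sum>m=1..M. (h (Suc t) m w - h t m w) * disc S r m t w) = 0)"

definition admissible_nss :: "nat \<Rightarrow> nat \<Rightarrow> (nat \<Rightarrow> 'w set set) \<Rightarrow> (nat \<Rightarrow> nat \<Rightarrow> 'w \<Rightarrow> real)
    \<Rightarrow> (nat \<Rightarrow> 'w \<Rightarrow> real) \<Rightarrow> (nat \<Rightarrow> nat \<Rightarrow> 'w \<Rightarrow> real) \<Rightarrow> bool" where
  "admissible_nss T M F S r h \<longleftrightarrow> predictable T M F h \<and> self_financing T M S r h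
     \<and> (\<forall>t\<in>{1..T}. \<forall>m\<in>{1..M}. \<forall>w. 0 \<le> h t m w)"

definition mp_arbitrage_mu :: "nat \<Rightarrow> nat \<Rightarrow> ('w::finite \<Rightarrow> real) set \<Rightarrow> (nat \<Rightarrow> 'w set set)
    \<Rightarrow> (nat \<Rightarrow> nat \<Rightarrow> 'w \<Rightarrow> real) \<Rightarrow> (nat \<Rightarrow> 'w \<Rightarrow> real) \<Rightarrow> (nat \<Rightarrow> nat \<Rightarrow> 'w \<Rightarrow> real) \<Rightarrow> bool" where
  "mp_arbitrage_mu T M \<P> F S r h \<longleftrightarrow> admissible_nss T M F S r h
     \<and> (\<forall>w. value0 M S r h w = 0)
     \<and> (\<forall>w. 0 \<le> valuet M S r h T w)
     \<and> (SUP P\<in>\<P>. expect P (valuet M S r h T)) > 0"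

definition strong_rn :: "nat \<Rightarrow> nat \<Rightarrow> ('w::finite \<Rightarrow> real) set \<Rightarrow> (nat \<Rightarrow> 'w set set)
    \<Rightarrow> (nat \<Rightarrow> nat \<Rightarrow> 'w \<Rightarrow> real) \<Rightarrow> (nat \<Rightarrow> 'w \<Rightarrow> real) \<Rightarrow> bool" where
  "strong_rn T M \<Q> F S r \<longleftrightarrow> \<Q> \<noteq> {} \<and> (\<forall>Q\<in>\<Q>. is_prob Q) \<and> (\<forall>w. (SUP Q\<in>\<Q>. Q w) > 0)
     \<and> (\<forall>Q\<in>\<Q>. \<forall>t u m w. t \<le> u \<and> u \<le> T \<and> m \<in> {1..M} \<and> Q w > 0 \<longrightarrow>
          cond_exp Q (F t) (disc S r m u) w \<le> disc S r m t w)"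

end

theory Submission
  imports Defs
begin

lemma atom_self: "w \<in> atom F w"
  by (auto simp: atom_def)

lemma atom_sym:
  assumes "\<forall>A\<in>F. - A \<in> F" and "v \<in> atom F w"
  shows "w \<in> atom F v"
proof (rule ccontr)
  assume "w \<notin> atom F v"
  then obtain A where A: "A \<in> F" "v \<in> A" "w \<notin> A" by (auto simp: atom_def)
  then have "- A \<in> F" using assms(1) by blast
  then have "v \<in> - A" using assms(2) A by (auto simp: atom_def)
  then show False using A by blast
qed

lemma atom_eq:
  assumes "\<forall>A\<in>F. - A \<in> F" and "v \<in> atom F w"
  shows "atom F v = atom F w"
proof -
  have w: "w \<in> atom F v" using atom_sym[OF assms] .
  have "\<forall>A\<in>F. (v \<in> A \<longleftrightarrow> w \<in> A)" using w assms(2) by (auto simp: atom_def)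
  then show ?thesis unfolding atom_def by blast
qed

lemma fmeas_atom:
  assumes "fmeas F h" and "v \<in> atom F w"
  shows "h v = h w"
proof -
  have "{u. h u = h w} \<in> F" using assms(1) by (simp add: fmeas_def)
  then show ?thesis using assms(2) by (auto simp: atom_def)
qed

lemma tower:
  fixes Q :: "'w::finite \<Rightarrow> real"
  assumes Q: "\<forall>w. 0 \<le> Q w" and C: "\<forall>A\<in>F. - A \<in> F"
  shows "(\<Sum>v\<in>UNIV. Q v * g v) =
         (\<Sum>w\<in>UNIV. Q w / (\<Sum>u\<in>atom F w. Q u) * (\<Sum>v\<in>atom F w. Q v * g v))"
proof -
  define qa where "qa w = (\<Sum>u\<in>atom F w. Q u)" for w
  have "(\<Sum>w\<in>UNIV. Q w / qa w * (\<Sum>v\<in>atom F w. Q v * g v))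
      = (\<Sum>w\<in>UNIV. \<Sum>v\<in>UNIV. (if v \<in> atom F w then Q w / qa w * (Q v * g v) else 0))"
    by (simp add: sum_distrib_left sum.If_cases)
  also have "\<dots> = (\<Sum>v\<in>UNIV. \<Sum>w\<in>UNIV. (if v \<in> atom F w then Q w / qa w * (Q v * g v) else 0))"
    by (rule sum.swap)
  also have "\<dots> = (\<Sum>v\<in>UNIV. Q v * g v)"
  proof (rule sum.cong[OF refl])
    fix v
    have "(\<Sum>w\<in>UNIV. (if v \<in> atom F w then Q w / qa w * (Q v * g v) else 0))
        = (\<Sum>w\<in>UNIV. (if w \<in> atom F v then Q w / qa v * (Q v * g v) else 0))"
    proof (rule sum.cong[OF refl])
      fix w
      show "(if v \<in> atom F w then Q w / qa w * (Q v * g v) else 0) =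
            (if w \<in> atom F v then Q w / qa v * (Q v * g v) else 0)"
        using atom_sym[OF C, of v w] atom_sym[OF C, of w v] atom_eq[OF C, of w v]
        by (auto simp: qa_def)
    qed
    also have "\<dots> = (\<Sum>w\<in>atom F v. Q w / qa v * (Q v * g v))"
      by (simp add: sum.If_cases)
    also have "\<dots> = (\<Sum>w\<in>atom F v. Q w / qa v) * (Q v * g v)"
      by (rule sum_distrib_right[symmetric])
    also have "\<dots> = qa v / qa v * (Q v * g v)"
      by (simp only: sum_divide_distrib[symmetric] qa_def)
    also have "\<dots> = Q v * g v"
    proof (cases "qa v = 0")
      case True
      have "Q v \<le> qa v" unfolding qa_def
        by (rule member_le_sum) (use Q atom_self in auto)
      then have "Q v = 0" using True Q by (metis order_antisym)
      then show ?thesis using True by simp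
    next
      case False then show ?thesis by simp
    qed
    finally show "(\<Sum>w\<in>UNIV. (if v \<in> atom F w then Q w / qa w * (Q v * g v) else 0)) = Q v * g v" .
  qed
  finally show ?thesis by (simp add: qa_def)
qed

lemma step_le:
  fixes Q :: "'w::finite \<Rightarrow> real"
  assumes Q: "\<forall>w. 0 \<le> Q w" and C: "\<forall>A\<in>F. - A \<in> F"
    and hm: "fmeas F h" and hp: "\<forall>w. 0 \<le> h w"
    and ce: "\<forall>w. Q w > 0 \<longrightarrow> cond_exp Q F Y w \<le> Z w"
  shows "(\<Sum>w\<in>UNIV. Q w * (h w * (Y w - Z w))) \<le> 0"
proof -
  have "(\<Sum>w\<in>UNIV. Q w * (h w * Y w))
     = (\<Sum>w\<in>UNIV. Q w / (\<Sum>u\<in>atom F w. Q u) * (\<Sum>v\<in>atom F w. Q v * (h v * Y v)))"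
    by (rule tower[OF Q C])
  also have "\<dots> = (\<Sum>w\<in>UNIV. Q w / (\<Sum>u\<in>atom F w. Q u) * (h w * (\<Sum>v\<in>atom F w. Q v * Y v)))"
  proof (rule sum.cong[OF refl])
    fix w
    have "(\<Sum>v\<in>atom F w. Q v * (h v * Y v)) = (\<Sum>v\<in>atom F w. h w * (Q v * Y v))"
      by (rule sum.cong[OF refl]) (simp add: fmeas_atom[OF hm])
    then show "Q w / (\<Sum>u\<in>atom F w. Q u) * (\<Sum>v\<in>atom F w. Q v * (h v * Y v)) =
               Q w / (\<Sum>u\<in>atom F w. Q u) * (h w * (\<Sum>v\<in>atom F w. Q v * Y v))"
      by (simp add: sum_distrib_left)
  qed
  also have "\<dots> = (\<Sum>w\<in>UNIV. Q w * h w * cond_exp Q F Y w)"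
    by (rule sum.cong[OF refl]) (simp add: cond_exp_def)
  also have "\<dots> \<le> (\<Sum>w\<in>UNIV. Q w * h w * Z w)"
  proof (rule sum_mono)
    fix w
    show "Q w * h w * cond_exp Q F Y w \<le> Q w * h w * Z w"
    proof (cases "Q w > 0")
      case True
      then show ?thesis using ce hp by (simp add: mult_left_mono)
    next
      case False
      then have "Q w = 0" using Q by (metis order_less_le)
      then show ?thesis by simp
    qed
  qed
  finally have "(\<Sum>w\<in>UNIV. Q w * (h w * Y w)) \<le> (\<Sum>w\<in>UNIV. Q w * h w * Z w)" .
  moreover have "(\<Sum>w\<in>UNIV. Q w * (h w * (Y w - Z w)))
      = (\<Sum>w\<in>UNIV. Q w * (h w * Y w)) - (\<Sum>w\<in>UNIV. Q w * h w * Z w)"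
    by (simp add: sum_subtractf[symmetric] algebra_simps)
  ultimately show ?thesis by simp
qed


lemma telescope:
  assumes sf: "self_financing T M S r h"
  shows "1 \<le> t \<longrightarrow> t \<le> T \<longrightarrow> valuet M S r h t w = value0 M S r h w +
     (\<Sum>s=1..t. \<Sum>m=1..M. h s m w * (disc S r m s w - disc S r m (s-1) w))"
proof (induction t)
  case 0
  then show ?case by simp
next
  case (Suc t)
  show ?case
  proof (cases "t = 0")
    case True
    then show ?thesis
      by (simp add: valuet_def value0_def sum_subtractf right_diff_distrib)
  next
    case False
    show ?thesis
    proof (intro impI)
      assume "Suc t \<le> T"
      then have tT: "t \<in> {1..<T}" using False by auto
      have s: "(h (Suc t) 0 w - h t 0 w) + (\<Sum>m=1..M. (h (Suc t) m w - h t m w) * disc S r m t w) = 0"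
        using sf tT by (simp add: self_financing_def)
      have IH: "valuet M S r h t w = value0 M S r h w +
         (\<Sum>s=1..t. \<Sum>m=1..M. h s m w * (disc S r m s w - disc S r m (s-1) w))"
        using Suc.IH False \<open>Suc t \<le> T\<close> by auto
      have "valuet M S r h (Suc t) w - valuet M S r h t w
          = (\<Sum>m=1..M. h (Suc t) m w * (disc S r m (Suc t) w - disc S r m t w))"
        using s by (simp add: valuet_def sum_subtractf right_diff_distrib left_diff_distrib
            sum.distrib algebra_simps)
      then show "valuet M S r h (Suc t) w = value0 M S r h w +
         (\<Sum>s=1..Suc t. \<Sum>m=1..M. h s m w * (disc S r m s w - disc S r m (s-1) w))"
        using IH by simp
    qed
  qed
qed

theorem mainTheorem8:
  fixes T M :: nat
    and F :: "nat \<Rightarrow> ('w::finite) set set"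
    and \<P> :: "('w \<Rightarrow> real) set"
    and r :: "nat \<Rightarrow> 'w \<Rightarrow> real"
    and S :: "nat \<Rightarrow> nat \<Rightarrow> 'w \<Rightarrow> real"
  assumes "1 \<le> T"
    and "filtration T F"
    and "\<P> \<noteq> {}" and "\<forall>P\<in>\<P>. is_prob P" and "\<forall>w. (SUP P\<in>\<P>. P w) > 0"
    and "\<forall>t\<in>{1..T}. \<forall>w. 0 \<le> r t w"
    and "\<forall>t\<in>{1..T}. fmeas (F (t - 1)) (r t)"
    and "\<forall>m\<in>{1..M}. \<forall>t\<le>T. fmeas (F t) (S m t)"
    and "\<forall>m\<in>{1..M}. \<forall>w. 0 < S m 0 w"
    and "\<exists>\<Q>. strong_rn T M \<Q> F S r"
  shows "\<not> (\<exists>h. mp_arbitrage_mu T M \<P> F S r h)"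
proof
  assume "\<exists>h. mp_arbitrage_mu T M \<P> F S r h"
  then obtain h where arb: "mp_arbitrage_mu T M \<P> F S r h" by blast
  obtain \<Q> where rn: "strong_rn T M \<Q> F S r" using assms(10) by blast
  define V where "V = valuet M S r h T"
  have adm: "admissible_nss T M F S r h" and v0: "\<forall>w. value0 M S r h w = 0"
    and Vnn: "\<forall>w. 0 \<le> V w" and sup: "(SUP P\<in>\<P>. expect P V) > 0"
    using arb by (auto simp: mp_arbitrage_mu_def V_def)
  have sf: "self_financing T M S r h" and pr: "predictable T M F h"
    and hnn: "\<forall>t\<in>{1..T}. \<forall>m\<in>{1..M}. \<forall>w. 0 \<le> h t m w"
    using adm by (auto simp: admissible_nss_def)
  have Vtel: "V w = (\<Sum>s=1..T. \<Sum>m=1..M. h s m w * (disc S r m s w - disc S r m (s-1) w))" for w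
    using telescope[OF sf, of T w] assms(1) v0 by (simp add: V_def)
  have QV0: "Q w * V w = 0" if QQ: "Q \<in> \<Q>" for Q w
  proof -
    have Qp: "is_prob Q" using rn QQ by (auto simp: strong_rn_def)
    then have Qnn: "\<forall>w. 0 \<le> Q w" by (simp add: is_prob_def)
    have "(\<Sum>w\<in>UNIV. Q w * V w)
        = (\<Sum>s=1..T. \<Sum>m=1..M. \<Sum>w\<in>UNIV. Q w * (h s m w * (disc S r m s w - disc S r m (s-1) w)))"
      by (simp add: Vtel sum_distrib_left sum.swap[of _ UNIV])
    also have "\<dots> \<le> 0"
    proof (rule sum_nonpos)
      fix s assume s: "s \<in> {1..T}"
      show "(\<Sum>m=1..M. \<Sum>w\<in>UNIV. Q w * (h s m w * (disc S r m s w - disc S r m (s-1) w))) \<le> 0"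
      proof (rule sum_nonpos)
      fix m assume m: "m \<in> {1..M}"
      have alg: "is_algebra (F (s-1))" using assms(2) s by (auto simp: filtration_def)
      show "(\<Sum>w\<in>UNIV. Q w * (h s m w * (disc S r m s w - disc S r m (s-1) w))) \<le> 0"
      proof (rule step_le[OF Qnn, where Y="disc S r m s" and Z="disc S r m (s-1)" and h="h s m" and F="F (s-1)"])
        show "\<forall>A\<in>F (s-1). - A \<in> F (s-1)" using alg by (simp add: is_algebra_def)
        show "fmeas (F (s-1)) (h s m)" using pr s m by (auto simp: predictable_def)
        show "\<forall>w. 0 \<le> h s m w" using hnn s m by auto
        show "\<forall>w. Q w > 0 \<longrightarrow> cond_exp Q (F (s-1)) (disc S r m s) w \<le> disc S r m (s-1) w"
          using rn QQ s m unfolding strong_rn_def by auto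
      qed
    qed
    qed
    finally have le: "(\<Sum>w\<in>UNIV. Q w * V w) \<le> 0" .
    have nn: "\<forall>w\<in>UNIV. 0 \<le> Q w * V w" using Qnn Vnn by simp
    then have "(\<Sum>w\<in>UNIV. Q w * V w) = 0" using le by (meson order_antisym sum_nonneg)
    then show ?thesis using nn by (simp add: sum_nonneg_eq_0_iff)
  qed
  have Vz: "V w = 0" for w
  proof -
    have ex: "\<exists>Q\<in>\<Q>. Q w > 0"
    proof (rule ccontr)
      assume "\<not> (\<exists>Q\<in>\<Q>. Q w > 0)"
      then have "\<forall>Q\<in>\<Q>. Q w \<le> 0" by auto
      then have "(SUP Q\<in>\<Q>. Q w) \<le> 0"
        using rn by (intro cSUP_least) (auto simp: strong_rn_def)
      then show False using rn by (auto simp: strong_rn_def not_less[symmetric])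
    qed
    then obtain Q where "Q \<in> \<Q>" "Q w > 0" by blast
    then show ?thesis using QV0[of Q w] by simp
  qed
  have "expect P V = 0" for P by (simp add: expect_def Vz)
  then have "(SUP P\<in>\<P>. expect P V) = 0" using assms(3) by simp
  then show False using sup by simp
qed

end
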